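(* Let $T\ge1$ be an integer and $a\in(0,1]$. Define $\alpha_0=\alpha_{-1}=1$ and $\alpha_t=\frac{T-t+2}{T-t+1+a}\alpha_{t-1}$ for $t=1,\dots,T$. Then \begin{enumerate} \item $\alpha_T\ge\frac{(T+1)^{1-a}}{2^{1-a}}$; \item $\frac{\sum_{t=1}^T\alpha_t}{\alpha_T}\le4\left(1+\frac{T^a-1}{a}\right)$; \item $4\left(1+\frac{T^a-1}{a}\right)\le 8T^a\ln(T+1)$. \end{enumerate} *)

theory Defs
  imports "HOL-Analysis.Analysis"
begin

fun alpha_seq :: "nat \<Rightarrow> real \<Rightarrow> nat \<Rightarrow> real" where
  "alpha_seq T a 0 = 1"
| "alpha_seq T a (Suc t) =
     (real T - real (Suc t) + 2) / (real T - real (Suc t) + 1 + a) * alpha_seq T a t"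

end

theory Submission
  imports Defs
begin

lemma two_four: "(X::real) \<ge> 0 \<Longrightarrow> 2 * (1 + X) \<le> 4 * (1 + X)" by simp

lemma alpha_pos:
  assumes "0 < a" "t \<le> T"
  shows "alpha_seq T a t > 0"
  using assms(2)
proof (induction t)
  case 0 then show ?case by simp
next
  case (Suc t)
  have "real T - real (Suc t) + 2 > 0" "real T - real (Suc t) + 1 + a > 0"
    using Suc.prems assms(1) by auto
  then show ?case using Suc by simp
qed

lemma young1:
  fixes r A :: real
  assumes "0 \<le> r" "r \<le> 1" "A > 0"
  shows "A powr r \<le> r * A + (1 - r)"
  using Youngs_inequality_0[of r "1 - r" A 1] assms by simp

lemma factor_bound:
  fixes j a :: real
  assumes "j \<ge> 1" "0 < a" "a \<le> 1"
  shows "((j+2)/(j+1)) powr (1-a) \<le> (j+1)/(j+a)"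
proof -
  have "((j+2)/(j+1)) powr (1-a) \<le> (1-a) * ((j+2)/(j+1)) + (1 - (1-a))"
    using young1[of "1-a" "(j+2)/(j+1)"] assms by simp
  also have "\<dots> = 1 + (1-a)/(j+1)" using assms by (simp add: field_simps)
  also have "\<dots> \<le> 1 + (1-a)/(j+a)"
    using assms by (intro add_left_mono divide_left_mono) auto
  also have "\<dots> = (j+1)/(j+a)" using assms by (simp add: field_simps)
  finally show ?thesis .
qed

lemma alpha_mono:
  assumes "0 < a" "a \<le> 1" "t \<le> u" "u \<le> T"
  shows "alpha_seq T a u \<ge> alpha_seq T a t * ((real T - real t + 2)/(real T - real u + 2)) powr (1-a)"
  using assms(3,4)
proof (induction u rule: dec_induct)
  case base
  have "real T - real t + 2 > 0" using base by simp
  then show ?case by simp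
next
  case (step u)
  define j where "j = real T - real u"
  have j1: "j \<ge> 1" using step by (simp add: j_def)
  have e1: "real T - real (Suc u) + 2 = j + 1" "real T - real (Suc u) + 1 + a = j + a"
    "real T - real u + 2 = j + 2" by (simp_all add: j_def)
  have IH: "alpha_seq T a u \<ge> alpha_seq T a t * ((real T - real t + 2)/(j+2)) powr (1-a)"
    using step by (simp add: e1)
  have pt: "alpha_seq T a t > 0" using alpha_pos[of a t T] assms step by simp
  have D: "real T - real t + 2 > 0" using step by simp
  have "alpha_seq T a t * ((real T - real t + 2)/(j+1)) powr (1-a)
      = alpha_seq T a t * ((real T - real t + 2)/(j+2)) powr (1-a) * ((j+2)/(j+1)) powr (1-a)"
  proof -
    have eq1: "(real T - real t + 2)/(j+1) = ((real T - real t + 2)/(j+2)) * ((j+2)/(j+1))"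
    proof -
      have "j+1 \<noteq> 0" "j+2 \<noteq> 0" using j1 by auto
      then show ?thesis by (simp add: divide_simps)
    qed
    have eq2: "(((real T - real t + 2)/(j+2)) * ((j+2)/(j+1))) powr (1-a)
       = ((real T - real t + 2)/(j+2)) powr (1-a) * ((j+2)/(j+1)) powr (1-a)"
      by (rule powr_mult)
    show ?thesis by (simp only: eq1 eq2 mult.assoc)
  qed
  also have "\<dots> \<le> alpha_seq T a u * ((j+1)/(j+a))"
  proof (rule mult_mono[OF IH factor_bound])
    show "1 \<le> j" "0 < a" "a \<le> 1" using j1 assms by auto
    show "0 \<le> alpha_seq T a u" using alpha_pos[of a u T] assms step by simp
    show "0 \<le> ((j + 2) / (j + 1)) powr (1 - a)" by simp
  qed
  also have "\<dots> = alpha_seq T a (Suc u)" by (simp only: alpha_seq.simps e1 mult.commute)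
  finally show ?case by (simp only: e1)
qed

lemma sum_bound:
  fixes a :: real
  assumes "0 < a" "a \<le> 1" "n \<ge> 1"
  shows "(\<Sum>k=1..n. real k powr (a-1)) \<le> 1 + (real n powr a - 1)/a"
  using assms(3)
proof (induction n rule: dec_induct)
  case base then show ?case by simp
next
  case (step n)
  have n0: "real n > 0" using step by simp
  have "real n powr a = (real (Suc n)) powr a * (real n / real (Suc n)) powr a"
    using n0 by (simp add: powr_divide)
  also have "\<dots> \<le> (real (Suc n)) powr a * (a * (real n / real (Suc n)) + (1 - a))"
    using young1[of a "real n / real (Suc n)"] assms n0 by (intro mult_left_mono) auto
  also have "\<dots> = real (Suc n) powr a - a * (real (Suc n) powr a / real (Suc n))"
    by (simp add: field_simps)
  also have "real (Suc n) powr a / real (Suc n) = real (Suc n) powr (a - 1)"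
    by (simp add: powr_diff)
  finally have key: "a * real (Suc n) powr (a-1) \<le> real (Suc n) powr a - real n powr a" by simp
  have "(\<Sum>k=1..Suc n. real k powr (a-1)) = (\<Sum>k=1..n. real k powr (a-1)) + real (Suc n) powr (a-1)"
    using step by simp
  also have "\<dots> \<le> 1 + (real n powr a - 1)/a + (real (Suc n) powr a - real n powr a)/a"
    using step.IH key assms by (intro add_mono) (auto simp: field_simps)
  also have "\<dots> = 1 + (real (Suc n) powr a - 1)/a" using assms by (simp add: field_simps)
  finally show ?case .
qed

theorem lemmaA7:
  fixes T :: nat and a :: real
  assumes "T \<ge> 1" and "0 < a" and "a \<le> 1"
  shows "alpha_seq T a T \<ge> (real T + 1) powr (1 - a) / 2 powr (1 - a)
    \<and> (\<Sum>t=1..T. alpha_seq T a t) / alpha_seq T a T \<le> 4 * (1 + (real T powr a - 1) / a)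
    \<and> 4 * (1 + (real T powr a - 1) / a) \<le> 8 * real T powr a * ln (real T + 1)"
proof (intro conjI)
  have aT: "alpha_seq T a T > 0" using alpha_pos assms by simp
  have "(real T + 1) powr (1 - a) / 2 powr (1 - a) = ((real T + 1)/2) powr (1-a)"
    by (simp add: powr_divide)
  also have "\<dots> \<le> ((real T + 2)/2) powr (1-a)"
    using assms by (intro powr_mono2) auto
  also have "\<dots> \<le> alpha_seq T a T"
    using alpha_mono[of a 0 T T] assms by simp
  finally show "alpha_seq T a T \<ge> (real T + 1) powr (1 - a) / 2 powr (1 - a)" .
next
  have aT: "alpha_seq T a T > 0" using alpha_pos assms by simp
  have Tpa: "real T powr a \<ge> 1" using assms by (simp add: ge_one_powr_ge_zero)
  have each: "alpha_seq T a t / alpha_seq T a T \<le> 2 * real (T + 1 - t) powr (a-1)"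
    if t: "t \<in> {1..T}" for t
  proof -
    define k where "k = real T - real t + 1"
    have k1: "k \<ge> 1" using t by (simp add: k_def)
    have kk: "real (T + 1 - t) = k" using t by (simp add: k_def of_nat_diff)
    have pt: "alpha_seq T a t > 0" using alpha_pos[of a t T] assms t by simp
    have m: "alpha_seq T a T \<ge> alpha_seq T a t * ((k+1)/2) powr (1-a)"
      using alpha_mono[of a t T T] assms t by (simp add: k_def add.assoc)
    have pp: "((k+1)/2) powr (1-a) > 0" using k1 by simp
    have "alpha_seq T a t / alpha_seq T a T \<le> alpha_seq T a t / (alpha_seq T a t * ((k+1)/2) powr (1-a))"
      using m pt pp aT by (intro divide_left_mono) auto
    also have "\<dots> = 1 / ((k+1)/2) powr (1-a)" using pt by simp
    also have "\<dots> = 2 powr (1-a) / (k+1) powr (1-a)" using k1 by (simp add: powr_divide)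
    also have "\<dots> \<le> 2 / k powr (1-a)"
    proof (rule frac_le)
      show "2 powr (1-a) \<le> 2" using assms powr_mono[of "1-a" 1 2] by simp
      show "k powr (1-a) \<le> (k+1) powr (1-a)" using k1 assms by (intro powr_mono2) auto
    qed (use k1 in auto)
    also have "\<dots> = 2 * k powr (a-1)" using k1
      by (simp add: powr_minus_divide[symmetric] divide_inverse powr_minus[symmetric])
    moreover have "real (Suc T - t) = k" using t by (simp add: k_def of_nat_diff)
    ultimately show ?thesis by simp
  qed
  have "(\<Sum>t=1..T. alpha_seq T a t) / alpha_seq T a T = (\<Sum>t=1..T. alpha_seq T a t / alpha_seq T a T)"
    by (simp add: sum_divide_distrib)
  also have "\<dots> \<le> (\<Sum>t=1..T. 2 * real (T + 1 - t) powr (a-1))"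
    by (rule sum_mono) (rule each)
  also have "(\<Sum>t=1..T. 2 * real (T + 1 - t) powr (a-1)) = (\<Sum>t=1..T. 2 * real t powr (a-1))"
    using sum.atLeastAtMost_rev[of "\<lambda>t. 2 * real t powr (a-1)" 1 T] by simp
  also have "\<dots> = 2 * (\<Sum>t=1..T. real t powr (a-1))" by (simp add: sum_distrib_left)
  also have "\<dots> \<le> 2 * (1 + (real T powr a - 1) / a)"
    by (rule mult_left_mono) (use sum_bound[of a T] assms in auto)
  also have "\<dots> \<le> 4 * (1 + (real T powr a - 1) / a)"
  proof -
    have "(real T powr a - 1) / a \<ge> 0" using Tpa assms by simp
    then show ?thesis by (rule two_four)
  qed
  finally show "(\<Sum>t=1..T. alpha_seq T a t) / alpha_seq T a T \<le> 4 * (1 + (real T powr a - 1) / a)" .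
next
  define P where "P = real T powr a"
  define L where "L = ln (real T)"
  define M where "M = ln (real T + 1)"
  have T1: "real T \<ge> 1" using assms by simp
  have L0: "L \<ge> 0" using T1 by (simp add: L_def)
  have LM: "L \<le> M" using T1 by (simp add: L_def M_def)
  have P1: "P \<ge> 1" using T1 assms by (simp add: P_def ge_one_powr_ge_zero)
  have Pexp: "P = exp (a * L)" using T1 by (simp add: P_def L_def powr_def)
  have ln2: "2 * ln (2::real) \<ge> 1"
  proof -
    have "exp (1/2::real) * exp (1/2) = exp 1" by (simp flip: exp_add)
    also have "\<dots> < 4" using exp_le by simp
    finally have lt4: "exp (1/2::real) * exp (1/2) < 4" .
    have "exp (1/2::real) < 2"
    proof (rule ccontr)
      assume "\<not> exp (1/2::real) < 2"
      then have "2 * 2 \<le> exp (1/2::real) * exp (1/2)" by (intro mult_mono) auto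
      then show False using lt4 by simp
    qed
    then have "1/2 < ln (2::real)" using ln_less_cancel_iff[of "exp (1/2)" 2] by simp
    then show ?thesis by simp
  qed
  have M2: "M \<ge> ln 2" using T1 by (simp add: M_def)
  have "exp (- (a*L)) \<ge> 1 - a*L" using exp_ge_add_one_self[of "-(a*L)"] by simp
  then have "P * exp (- (a*L)) \<ge> P * (1 - a*L)" using P1 by (intro mult_left_mono) auto
  then have "1 \<ge> P - P * a * L" using Pexp by (simp add: exp_minus field_simps)
  then have "(P - 1)/a \<le> P * L" using assms by (simp add: field_simps)
  then have "4 * (1 + (P - 1)/a) \<le> 4 * (1 + P * L)" by (intro mult_left_mono add_left_mono) auto
  also have "\<dots> \<le> 4 * (P + P * L)" using P1 by simp
  also have "\<dots> \<le> 4 * (P * (2*M))"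
  proof -
    have sq: "4 * real T \<le> (real T + 1) * (real T + 1)"
    proof -
      have "0 \<le> (real T - 1) * (real T - 1)" by simp
      then show ?thesis by (simp add: algebra_simps)
    qed
    have "ln (4 * real T) \<le> ln ((real T + 1) * (real T + 1))"
      using sq T1 by (subst ln_le_cancel_iff) auto
    moreover have "ln (4 * real T) = 2 * ln 2 + L"
    proof -
      have "ln (4 * real T) = ln 4 + ln (real T)" by (rule ln_mult_pos) (use T1 in auto)
      moreover have "ln (2 * 2::real) = ln 2 + ln 2" by (rule ln_mult_pos) auto
      ultimately show ?thesis unfolding L_def by simp
    qed
    moreover have "ln ((real T + 1) * (real T + 1)) = M + M"
      unfolding M_def by (rule ln_mult_pos) (use T1 in auto)
    ultimately have h: "1 + L \<le> 2 * M" using ln2 by linarith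
    have "P * (1 + L) \<le> P * (2 * M)" using h P1 by (intro mult_left_mono) auto
    then show ?thesis by (simp add: distrib_left)
  qed
  finally show "4 * (1 + (real T powr a - 1) / a) \<le> 8 * real T powr a * ln (real T + 1)"
    by (simp add: P_def M_def)
qed

end
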